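(* Let $M(t)\in\mathbb{R}^{n\times n}$ be symmetric and satisfy the Gram flow $\dot M=-(M\Phi+\Phi M)$, where $\Phi(t)$ is symmetric. Suppose that on the time interval considered $M(t)=\sum_e\lambda_e(t)E_e(t)$ is its spectral decomposition, with the eigenvalues $\lambda_e(t)$ remaining distinct (isolated) and the orthogonal spectral projectors $E_e(t)$ differentiable. Then for each $e$, $$\dot E_e=\sum_{f\neq e}\frac{\lambda_e+\lambda_f}{\lambda_f-\lambda_e}\big(E_e\Phi E_f+E_f\Phi E_e\big).$$ *)

theory Defs
  imports "HOL-Analysis.Analysis"
begin

end

theory Submission
  imports Defs
begin


lemma mm_bb: "bounded_bilinear ((**) :: real^'n^'n \<Rightarrow> real^'n^'n \<Rightarrow> real^'n^'n)"
proof -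
  have "bilinear ((**) :: real^'n^'n \<Rightarrow> real^'n^'n \<Rightarrow> real^'n^'n)"
    unfolding bilinear_def linear_iff
    by (auto simp: vec_eq_iff matrix_matrix_mult_def sum.distrib sum_distrib_left
        distrib_left distrib_right algebra_simps)
  then show ?thesis by (simp add: bilinear_conv_bounded_bilinear)
qed

lemma deriv_zero_on_open:
  fixes g :: "real \<Rightarrow> 'a::real_normed_vector"
  assumes "(g has_vector_derivative D) (at t)" "open T" "t \<in> T" "\<And>s. s \<in> T \<Longrightarrow> g s = c"
  shows "D = 0"
proof -
  have "((\<lambda>_. c) has_vector_derivative D) (at t)"
    using has_vector_derivative_transform_within_open[OF assms(1,2,3)] assms(4) by metis
  moreover have "((\<lambda>_. c) has_vector_derivative 0) (at t)" by (rule has_vector_derivative_const)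
  ultimately show ?thesis by (rule vector_derivative_unique_at)
qed

lemma pair_alg1:
  fixes P Q DP DQ M M' Phi :: "real^'n^'n"
  assumes PP: "P ** P = P" and QQ: "Q ** Q = Q"
    and h2: "P ** DQ + DP ** Q = 0"
    and h3: "(P ** M) ** DQ + (P ** M' + DP ** M) ** Q = 0"
    and M': "M' = - (M ** Phi + Phi ** M)"
    and MQ: "M ** Q = b *\<^sub>R Q" and PM: "P ** M = a *\<^sub>R P" and ab: "b \<noteq> a"
  shows "P ** DP ** Q = ((a + b) / (b - a)) *\<^sub>R (P ** Phi ** Q)"
proof -
  interpret mm: bounded_bilinear "(**) :: real^'n^'n \<Rightarrow> real^'n^'n \<Rightarrow> real^'n^'n"
    by (rule mm_bb)
  have PPx: "X ** P ** P = X ** P" for X :: "real^'n^'n" by (metis PP matrix_mul_assoc)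
  have QQx: "X ** Q ** Q = X ** Q" for X :: "real^'n^'n" by (metis QQ matrix_mul_assoc)
  have MQx: "X ** M ** Q = b *\<^sub>R (X ** Q)" for X :: "real^'n^'n" by (metis MQ matrix_mul_assoc mm.scaleR_right)
  have PMx: "X ** P ** M = a *\<^sub>R (X ** P)" for X :: "real^'n^'n" by (metis PM matrix_mul_assoc mm.scaleR_right)
  note rules = matrix_mul_assoc mm.add_left mm.add_right mm.scaleR_left mm.scaleR_right
    mm.minus_left mm.minus_right mm.diff_left mm.diff_right mm.zero_left mm.zero_right PP QQ PPx QQx MQx PMx MQ PM
  have e2: "P ** (P ** DQ + DP ** Q) ** Q = 0" using h2 by simp
  have e3: "P ** ((P ** M) ** DQ + (P ** M' + DP ** M) ** Q) ** Q = 0" using h3 by simp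
  from e2 have v: "P ** DQ ** Q = - (P ** DP ** Q)" by (simp add: rules eq_neg_iff_add_eq_0 add.commute)
  from e3 have "a *\<^sub>R (P ** DQ ** Q) - (a + b) *\<^sub>R (P ** Phi ** Q) + b *\<^sub>R (P ** DP ** Q) = 0"
    by (simp add: rules M' algebra_simps)
  then have "(b - a) *\<^sub>R (P ** DP ** Q) = (a + b) *\<^sub>R (P ** Phi ** Q)"
    by (simp add: v algebra_simps)
  then have "P ** DP ** Q = (1 / (b - a)) *\<^sub>R ((a + b) *\<^sub>R (P ** Phi ** Q))"
    using ab by (metis (no_types, lifting) eq_iff_diff_eq_0 nonzero_divide_eq_eq scaleR_one scaleR_scaleR divide_inverse_commute mult.commute)
  then show ?thesis by simp
qed

lemma pair_alg2:
  fixes P Q DP DQ M M' Phi :: "real^'n^'n"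
  assumes PP: "P ** P = P" and QQ: "Q ** Q = Q"
    and h2: "Q ** DP + DQ ** P = 0"
    and h3: "(Q ** M) ** DP + (Q ** M' + DQ ** M) ** P = 0"
    and M': "M' = - (M ** Phi + Phi ** M)"
    and MP: "M ** P = a *\<^sub>R P" and QM: "Q ** M = b *\<^sub>R Q" and ab: "b \<noteq> a"
  shows "Q ** DP ** P = ((a + b) / (b - a)) *\<^sub>R (Q ** Phi ** P)"
proof -
  interpret mm: bounded_bilinear "(**) :: real^'n^'n \<Rightarrow> real^'n^'n \<Rightarrow> real^'n^'n"
    by (rule mm_bb)
  have PPx: "X ** P ** P = X ** P" for X :: "real^'n^'n" by (metis PP matrix_mul_assoc)
  have QQx: "X ** Q ** Q = X ** Q" for X :: "real^'n^'n" by (metis QQ matrix_mul_assoc)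
  have MPx: "X ** M ** P = a *\<^sub>R (X ** P)" for X :: "real^'n^'n" by (metis MP matrix_mul_assoc mm.scaleR_right)
  have QMx: "X ** Q ** M = b *\<^sub>R (X ** Q)" for X :: "real^'n^'n" by (metis QM matrix_mul_assoc mm.scaleR_right)
  note rules = matrix_mul_assoc mm.add_left mm.add_right mm.scaleR_left mm.scaleR_right
    mm.minus_left mm.minus_right mm.diff_left mm.diff_right mm.zero_left mm.zero_right PP QQ PPx QQx MPx QMx MP QM
  have e2: "Q ** (Q ** DP + DQ ** P) ** P = 0" using h2 by simp
  have e3: "Q ** ((Q ** M) ** DP + (Q ** M' + DQ ** M) ** P) ** P = 0" using h3 by simp
  from e2 have v: "Q ** DQ ** P = - (Q ** DP ** P)" by (simp add: rules eq_neg_iff_add_eq_0 add.commute)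
  from e3 have "b *\<^sub>R (Q ** DP ** P) - (a + b) *\<^sub>R (Q ** Phi ** P) + a *\<^sub>R (Q ** DQ ** P) = 0"
    by (simp add: rules M' algebra_simps)
  then have "(b - a) *\<^sub>R (Q ** DP ** P) = (a + b) *\<^sub>R (Q ** Phi ** P)"
    by (simp add: v algebra_simps)
  then have "Q ** DP ** P = (1 / (b - a)) *\<^sub>R ((a + b) *\<^sub>R (Q ** Phi ** P))"
    using ab by (metis (no_types, lifting) eq_iff_diff_eq_0 nonzero_divide_eq_eq scaleR_one scaleR_scaleR divide_inverse_commute mult.commute)
  then show ?thesis by simp
qed

lemma decomp_alg:
  fixes P DP S :: "real^'n^'n"
  assumes PP: "P ** P = P" and d1: "P ** DP + DP ** P = DP" and S: "S = mat 1 - P"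
  shows "DP = P ** DP ** S + S ** DP ** P"
proof -
  interpret mm: bounded_bilinear "(**) :: real^'n^'n \<Rightarrow> real^'n^'n \<Rightarrow> real^'n^'n"
    by (rule mm_bb)
  have PPx: "X ** P ** P = X ** P" for X :: "real^'n^'n" by (metis PP matrix_mul_assoc)
  have "P ** (P ** DP + DP ** P) ** P = P ** DP ** P" using d1 by simp
  then have z: "P ** DP ** P = 0"
    by (simp add: matrix_mul_assoc mm.add_left mm.add_right PP PPx)
  show ?thesis
    by (simp add: S mm.diff_left mm.diff_right matrix_mul_assoc z PP PPx d1)
qed

theorem corollary7:
  fixes M Phi :: "real \<Rightarrow> real^'n^'n"
    and T :: "real set"
    and K :: "'k set"
    and lam :: "'k \<Rightarrow> real \<Rightarrow> real"
    and E :: "'k \<Rightarrow> real \<Rightarrow> real^'n^'n"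
    and E' :: "'k \<Rightarrow> real \<Rightarrow> real^'n^'n"
  assumes T_open: "open T"
    and M_sym: "\<And>t. t \<in> T \<Longrightarrow> transpose (M t) = M t"
    and Phi_sym: "\<And>t. t \<in> T \<Longrightarrow> transpose (Phi t) = Phi t"
    and gram_flow: "\<And>t. t \<in> T \<Longrightarrow>
        (M has_vector_derivative (- (M t ** Phi t + Phi t ** M t))) (at t)"
    and K_fin: "finite K"
    and E_nonzero: "\<And>t e. t \<in> T \<Longrightarrow> e \<in> K \<Longrightarrow> E e t \<noteq> 0"
    and E_sym: "\<And>t e. t \<in> T \<Longrightarrow> e \<in> K \<Longrightarrow> transpose (E e t) = E e t"
    and E_idem: "\<And>t e. t \<in> T \<Longrightarrow> e \<in> K \<Longrightarrow> E e t ** E e t = E e t"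
    and E_orth: "\<And>t e f. t \<in> T \<Longrightarrow> e \<in> K \<Longrightarrow> f \<in> K \<Longrightarrow> e \<noteq> f \<Longrightarrow>
        E e t ** E f t = 0"
    and E_complete: "\<And>t. t \<in> T \<Longrightarrow> (\<Sum>e\<in>K. E e t) = mat 1"
    and spectral: "\<And>t. t \<in> T \<Longrightarrow> M t = (\<Sum>e\<in>K. lam e t *\<^sub>R E e t)"
    and distinct_eig: "\<And>t e f. t \<in> T \<Longrightarrow> e \<in> K \<Longrightarrow> f \<in> K \<Longrightarrow> e \<noteq> f \<Longrightarrow>
        lam e t \<noteq> lam f t"
    and E_deriv: "\<And>t e. t \<in> T \<Longrightarrow> e \<in> K \<Longrightarrow>
        (E e has_vector_derivative E' e t) (at t)"
  shows "\<And>t e. t \<in> T \<Longrightarrow> e \<in> K \<Longrightarrow>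
     E' e t = (\<Sum>f\<in>K - {e}. ((lam e t + lam f t) / (lam f t - lam e t)) *\<^sub>R
                 (E e t ** Phi t ** E f t + E f t ** Phi t ** E e t))"
proof -
  interpret mm: bounded_bilinear "(**) :: real^'n^'n \<Rightarrow> real^'n^'n \<Rightarrow> real^'n^'n"
    by (rule mm_bb)
  fix t e assume tT: "t \<in> T" and eK: "e \<in> K"
  have ME: "M t ** E f t = lam f t *\<^sub>R E f t" if fK: "f \<in> K" for f
  proof -
    have "M t ** E f t = (\<Sum>g\<in>K. lam g t *\<^sub>R (E g t ** E f t))"
      by (simp add: spectral[OF tT] mm.sum_left mm.scaleR_left)
    also have "\<dots> = lam f t *\<^sub>R (E f t ** E f t)"
      using K_fin fK by (simp add: sum.remove[OF K_fin fK] E_orth[OF tT] sum.neutral)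
    finally show ?thesis using E_idem[OF tT fK] by simp
  qed
  show "E' e t = (\<Sum>f\<in>K - {e}. ((lam e t + lam f t) / (lam f t - lam e t)) *\<^sub>R
                 (E e t ** Phi t ** E f t + E f t ** Phi t ** E e t))"
  proof -
    have EM: "E f t ** M t = lam f t *\<^sub>R E f t" if fK: "f \<in> K" for f
    proof -
      have "E f t ** M t = (\<Sum>g\<in>K. lam g t *\<^sub>R (E f t ** E g t))"
        by (simp add: spectral[OF tT] mm.sum_right mm.scaleR_right)
      also have "\<dots> = lam f t *\<^sub>R (E f t ** E f t)"
        using K_fin fK by (simp add: sum.remove[OF K_fin fK]) (rule sum.neutral, auto simp: E_orth[OF tT fK])
      finally show ?thesis using E_idem[OF tT fK] by simp
    qed
    define M' where "M' = - (M t ** Phi t + Phi t ** M t)"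
    have dEE: "((\<lambda>s. E g s ** E f s) has_vector_derivative (E g t ** E' f t + E' g t ** E f t)) (at t)"
      if "g \<in> K" "f \<in> K" for g f
      by (rule mm.has_vector_derivative[OF E_deriv[OF tT that(1)] E_deriv[OF tT that(2)]])
    have d1: "E e t ** E' e t + E' e t ** E e t = E' e t"
    proof -
      have "((\<lambda>s. E e s ** E e s - E e s) has_vector_derivative
            ((E e t ** E' e t + E' e t ** E e t) - E' e t)) (at t)"
        by (rule has_vector_derivative_diff[OF dEE[OF eK eK] E_deriv[OF tT eK]])
      then have "(E e t ** E' e t + E' e t ** E e t) - E' e t = 0"
        by (rule deriv_zero_on_open[OF _ T_open tT, where c = 0]) (simp add: E_idem eK)
      then show ?thesis by simp
    qed
    have d2: "E g t ** E' f t + E' g t ** E f t = 0"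
      if "g \<in> K" "f \<in> K" "g \<noteq> f" for g f
      by (rule deriv_zero_on_open[OF dEE[OF that(1,2)] T_open tT, where c = 0]) (simp add: E_orth that)
    have d3: "(E g t ** M t) ** E' f t + (E g t ** M' + E' g t ** M t) ** E f t = 0"
      if "g \<in> K" "f \<in> K" "g \<noteq> f" for g f
    proof -
      have i: "((\<lambda>s. E g s ** M s) has_vector_derivative (E g t ** M' + E' g t ** M t)) (at t)"
        unfolding M'_def by (rule mm.has_vector_derivative[OF E_deriv[OF tT that(1)] gram_flow[OF tT]])
      have "((\<lambda>s. (E g s ** M s) ** E f s) has_vector_derivative
          ((E g t ** M t) ** E' f t + (E g t ** M' + E' g t ** M t) ** E f t)) (at t)"
        by (rule mm.has_vector_derivative[OF i E_deriv[OF tT that(2)]])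
      then show ?thesis
      proof (rule deriv_zero_on_open[OF _ T_open tT, where c = 0])
        fix s assume sT: "s \<in> T"
        have "M s ** E f s = lam f s *\<^sub>R E f s"
        proof -
          have "M s ** E f s = (\<Sum>h\<in>K. lam h s *\<^sub>R (E h s ** E f s))"
            by (simp add: spectral[OF sT] mm.sum_left mm.scaleR_left)
          also have "\<dots> = lam f s *\<^sub>R (E f s ** E f s)"
            using K_fin that by (simp add: sum.remove[OF K_fin that(2)] E_orth[OF sT] sum.neutral)
          finally show ?thesis using E_idem[OF sT that(2)] by simp
        qed
        then show "(E g s ** M s) ** E f s = 0"
          by (simp add: matrix_mul_assoc[symmetric] mm.scaleR_right E_orth[OF sT that])
      qed
    qed
    have S: "(\<Sum>f\<in>K - {e}. E f t) = mat 1 - E e t"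
      using E_complete[OF tT] sum.remove[OF K_fin eK, of "\<lambda>f. E f t"] by (metis add_diff_cancel_left')
    have "E' e t = E e t ** E' e t ** (\<Sum>f\<in>K - {e}. E f t) + (\<Sum>f\<in>K - {e}. E f t) ** E' e t ** E e t"
      by (rule decomp_alg[OF E_idem[OF tT eK] d1 S])
    also have "\<dots> = (\<Sum>f\<in>K - {e}. E e t ** E' e t ** E f t + E f t ** E' e t ** E e t)"
      by (simp add: mm.sum_left mm.sum_right sum.distrib)
    also have "\<dots> = (\<Sum>f\<in>K - {e}. ((lam e t + lam f t) / (lam f t - lam e t)) *\<^sub>R
                 (E e t ** Phi t ** E f t + E f t ** Phi t ** E e t))"
    proof (rule sum.cong[OF refl])
      fix f assume f: "f \<in> K - {e}"
      then have fK: "f \<in> K" and ef: "e \<noteq> f" by auto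
      have ab: "lam f t \<noteq> lam e t" using distinct_eig[OF tT fK eK] ef by auto
      have 1: "E e t ** E' e t ** E f t = ((lam e t + lam f t) / (lam f t - lam e t)) *\<^sub>R (E e t ** Phi t ** E f t)"
        by (rule pair_alg1[OF E_idem[OF tT eK] E_idem[OF tT fK] d2[OF eK fK ef] d3[OF eK fK ef]
              M'_def ME[OF fK] EM[OF eK] ab])
      have 2: "E f t ** E' e t ** E e t = ((lam e t + lam f t) / (lam f t - lam e t)) *\<^sub>R (E f t ** Phi t ** E e t)"
        by (rule pair_alg2[OF E_idem[OF tT eK] E_idem[OF tT fK] d2[OF fK eK] d3[OF fK eK]
              M'_def ME[OF eK] EM[OF fK] ab]) (use ef in auto)
      show "E e t ** E' e t ** E f t + E f t ** E' e t ** E e t =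
          ((lam e t + lam f t) / (lam f t - lam e t)) *\<^sub>R (E e t ** Phi t ** E f t + E f t ** Phi t ** E e t)"
        by (simp add: 1 2 scaleR_add_right)
    qed
    finally show ?thesis .
  qed
qed

end
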